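(* Let $\mathcal G$ be a 2-group such that the sets of objects $\mathcal G_0$, morphisms $\mathcal G_1$ and composable morphisms are manifolds, all structure maps (source $s$, target $t$, identity, composition) are smooth, and the multiplication functor $\otimes$, the inversion functor $\overline{\,\cdot\,}$ and the associator $\alpha$ are smooth. If $s^{-1}(\mathbb1)\subseteq\mathcal G_1$ is discrete in the induced topology, then the map $(\mathcal G_0)^3\to s^{-1}(\mathbb1)$, $(g,h,k)\mapsto\alpha(g,h,k)\otimes\mathrm{id}_{\overline{(g\otimes h)\otimes k}}$, is locally constant.
   Context: Manifolds are modelled on locally convex spaces. A 2-group is a small category $\mathcal G$ with a multiplication functor $\otimes\colon\mathcal G\times\mathcal G\to\mathcal G$, an inversion functor $\overline{\,\cdot\,}\colon\mathcal G\to\mathcal G$, a unit object $\mathbb1$ and natural isomorphisms (associators) $\alpha(g,h,k)=\alpha_{g,h,k}\colon(g\otimes h)\otimes k\to g\otimes(h\otimes k)$ such that $g\otimes\mathbb1=g=\mathbb1\otimes g$ and $g\otimes\overline g=\mathbb1=\overline g\otimes g$ on objects and morphisms (with $\mathbb 1$ identified with $\mathrm{id}_{\mathbb1}$), $\alpha$ satisfies the pentagon identity $\alpha_{g,h,k\otimes l}\circ\alpha_{g\otimes h,k,l}=(\mathrm{id}_g\otimes\alpha_{h,k,l})\circ\alpha_{g,h\otimes k,l}\circ(\alpha_{g,h,k}\otimes\mathrm{id}_l)$, $\alpha_{g,h,k}$ is an identity if one of $g,h,k$ is $\mathbb1$, and $\alpha_{g,\overline g,g}=\mathrm{id}_g$,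 $\alpha_{\overline g,g,\overline g}=\mathrm{id}_{\overline g}$. *)

theory Defs
  imports "HOL-Analysis.Analysis"
begin

text \<open>Data of a 2-group: a small category (objects in the topological carrier of obj_top,
  morphisms in that of mor_top) with source, target, identities and composition
  (cmp g f is g after f, defined when src g = tgt f), a multiplication functor
  (tns_o on objects, tns_m on morphisms), an inversion functor (inv_o, inv_m),
  a unit object and the associator.\<close>

record ('o, 'm) two_group_data =
  obj_top :: "'o topology"
  mor_top :: "'m topology"
  src :: "'m \<Rightarrow> 'o"
  tgt :: "'m \<Rightarrow> 'o"
  idm :: "'o \<Rightarrow> 'm"
  cmp :: "'m \<Rightarrow> 'm \<Rightarrow> 'm"
  tns_o :: "'o \<Rightarrow> 'o \<Rightarrow> 'o"
  tns_m :: "'m \<Rightarrow> 'm \<Rightarrow> 'm"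
  inv_o :: "'o \<Rightarrow> 'o"
  inv_m :: "'m \<Rightarrow> 'm"
  unit_o :: "'o"
  assoc :: "'o \<Rightarrow> 'o \<Rightarrow> 'o \<Rightarrow> 'm"

definition objs :: "('o, 'm, 'z) two_group_data_scheme \<Rightarrow> 'o set" where
  "objs G = topspace (obj_top G)"

definition mors :: "('o, 'm, 'z) two_group_data_scheme \<Rightarrow> 'm set" where
  "mors G = topspace (mor_top G)"

definition hom :: "('o, 'm, 'z) two_group_data_scheme \<Rightarrow> 'o \<Rightarrow> 'o \<Rightarrow> 'm set" where
  "hom G x y = {f \<in> mors G. src G f = x \<and> tgt G f = y}"

definition composable :: "('o, 'm, 'z) two_group_data_scheme \<Rightarrow> ('m \<times> 'm) set" where
  "composable G = {(g, f). g \<in> mors G \<and> f \<in> mors G \<and> src G g = tgt G f}"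

definition is_iso :: "('o, 'm, 'z) two_group_data_scheme \<Rightarrow> 'm \<Rightarrow> bool" where
  "is_iso G f \<longleftrightarrow> f \<in> mors G \<and> (\<exists>h \<in> hom G (tgt G f) (src G f).
       cmp G h f = idm G (src G f) \<and> cmp G f h = idm G (tgt G f))"

definition is_category :: "('o, 'm, 'z) two_group_data_scheme \<Rightarrow> bool" where
  "is_category G \<longleftrightarrow>
     (\<forall>f \<in> mors G. src G f \<in> objs G \<and> tgt G f \<in> objs G) \<and>
     (\<forall>x \<in> objs G. idm G x \<in> hom G x x) \<and>
     (\<forall>(g, f) \<in> composable G. cmp G g f \<in> hom G (src G f) (tgt G g)) \<and>
     (\<forall>f \<in> mors G. cmp G f (idm G (src G f)) = f \<and> cmp G (idm G (tgt G f)) f = f) \<and>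
     (\<forall>f \<in> mors G. \<forall>g \<in> mors G. \<forall>h \<in> mors G.
        src G h = tgt G g \<longrightarrow> src G g = tgt G f \<longrightarrow>
        cmp G h (cmp G g f) = cmp G (cmp G h g) f)"

definition is_two_group :: "('o, 'm, 'z) two_group_data_scheme \<Rightarrow> bool" where
  "is_two_group G \<longleftrightarrow>
     is_category G \<and>
     \<comment> \<open>multiplication is a functor G x G -> G\<close>
     (\<forall>x \<in> objs G. \<forall>y \<in> objs G. tns_o G x y \<in> objs G) \<and>
     (\<forall>f \<in> mors G. \<forall>g \<in> mors G. tns_m G f g \<in> mors G \<and>
        src G (tns_m G f g) = tns_o G (src G f) (src G g) \<and>
        tgt G (tns_m G f g) = tns_o G (tgt G f) (tgt G g)) \<and>
     (\<forall>x \<in> objs G. \<forall>y \<in> objs G. tns_m G (idm G x) (idm G y) = idm G (tns_o G x y)) \<and>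
     (\<forall>(f', f) \<in> composable G. \<forall>(g', g) \<in> composable G.
        tns_m G (cmp G f' f) (cmp G g' g) = cmp G (tns_m G f' g') (tns_m G f g)) \<and>
     \<comment> \<open>inversion is a functor G -> G\<close>
     (\<forall>x \<in> objs G. inv_o G x \<in> objs G) \<and>
     (\<forall>f \<in> mors G. inv_m G f \<in> mors G \<and>
        src G (inv_m G f) = inv_o G (src G f) \<and> tgt G (inv_m G f) = inv_o G (tgt G f)) \<and>
     (\<forall>x \<in> objs G. inv_m G (idm G x) = idm G (inv_o G x)) \<and>
     (\<forall>(g, f) \<in> composable G. inv_m G (cmp G g f) = cmp G (inv_m G g) (inv_m G f)) \<and>
     \<comment> \<open>unit (identified with its identity morphism) and strict inverses\<close>
     unit_o G \<in> objs G \<and>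
     (\<forall>x \<in> objs G. tns_o G x (unit_o G) = x \<and> tns_o G (unit_o G) x = x) \<and>
     (\<forall>f \<in> mors G. tns_m G f (idm G (unit_o G)) = f \<and> tns_m G (idm G (unit_o G)) f = f) \<and>
     (\<forall>x \<in> objs G. tns_o G x (inv_o G x) = unit_o G \<and> tns_o G (inv_o G x) x = unit_o G) \<and>
     (\<forall>f \<in> mors G. tns_m G f (inv_m G f) = idm G (unit_o G) \<and>
                    tns_m G (inv_m G f) f = idm G (unit_o G)) \<and>
     \<comment> \<open>associator: natural isomorphism (g h) k -> g (h k)\<close>
     (\<forall>x \<in> objs G. \<forall>y \<in> objs G. \<forall>z \<in> objs G.
        assoc G x y z \<in> hom G (tns_o G (tns_o G x y) z) (tns_o G x (tns_o G y z)) \<and>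
        is_iso G (assoc G x y z)) \<and>
     (\<forall>f1 \<in> mors G. \<forall>f2 \<in> mors G. \<forall>f3 \<in> mors G.
        cmp G (assoc G (tgt G f1) (tgt G f2) (tgt G f3)) (tns_m G (tns_m G f1 f2) f3) =
        cmp G (tns_m G f1 (tns_m G f2 f3)) (assoc G (src G f1) (src G f2) (src G f3))) \<and>
     \<comment> \<open>pentagon identity\<close>
     (\<forall>g \<in> objs G. \<forall>h \<in> objs G. \<forall>k \<in> objs G. \<forall>l \<in> objs G.
        cmp G (assoc G g h (tns_o G k l)) (assoc G (tns_o G g h) k l) =
        cmp G (tns_m G (idm G g) (assoc G h k l))
          (cmp G (assoc G g (tns_o G h k) l) (tns_m G (assoc G g h k) (idm G l)))) \<and>
     \<comment> \<open>normalisation of the associator\<close>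
     (\<forall>g \<in> objs G. \<forall>h \<in> objs G. \<forall>k \<in> objs G.
        (g = unit_o G \<or> h = unit_o G \<or> k = unit_o G) \<longrightarrow>
        assoc G g h k = idm G (tns_o G (tns_o G g h) k)) \<and>
     (\<forall>g \<in> objs G. assoc G g (inv_o G g) g = idm G g \<and>
                    assoc G (inv_o G g) g (inv_o G g) = idm G (inv_o G g))"

text \<open>Topological 2-group: all structure maps continuous (this is what smoothness of the
  structure maps of a Lie 2-group modelled on locally convex spaces yields; spaces Hausdorff).\<close>
definition topological_two_group :: "('o, 'm, 'z) two_group_data_scheme \<Rightarrow> bool" where
  "topological_two_group G \<longleftrightarrow>
     is_two_group G \<and>
     Hausdorff_space (obj_top G) \<and> Hausdorff_space (mor_top G) \<and>
     continuous_map (mor_top G) (obj_top G) (src G) \<and>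
     continuous_map (mor_top G) (obj_top G) (tgt G) \<and>
     continuous_map (obj_top G) (mor_top G) (idm G) \<and>
     continuous_map (subtopology (prod_topology (mor_top G) (mor_top G)) (composable G))
        (mor_top G) (\<lambda>(g, f). cmp G g f) \<and>
     continuous_map (prod_topology (obj_top G) (obj_top G)) (obj_top G) (\<lambda>(x, y). tns_o G x y) \<and>
     continuous_map (prod_topology (mor_top G) (mor_top G)) (mor_top G) (\<lambda>(f, g). tns_m G f g) \<and>
     continuous_map (obj_top G) (obj_top G) (inv_o G) \<and>
     continuous_map (mor_top G) (mor_top G) (inv_m G) \<and>
     continuous_map (prod_topology (obj_top G) (prod_topology (obj_top G) (obj_top G)))
        (mor_top G) (\<lambda>(x, y, z). assoc G x y z)"

definition locally_constant_on :: "'a topology \<Rightarrow> ('a \<Rightarrow> 'b) \<Rightarrow> bool" where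
  "locally_constant_on X f \<longleftrightarrow>
     (\<forall>x \<in> topspace X. \<exists>U. openin X U \<and> x \<in> U \<and> (\<forall>y \<in> U. f y = f x))"

definition discrete_in :: "'a topology \<Rightarrow> 'a set \<Rightarrow> bool" where
  "discrete_in X S \<longleftrightarrow> (\<forall>U \<subseteq> S. openin (subtopology X S) U)"

end

theory Submission
  imports Defs
begin

lemma tgp:
  assumes "is_two_group G"
  shows "is_category G"
    "\<forall>x \<in> objs G. \<forall>y \<in> objs G. tns_o G x y \<in> objs G"
    "\<forall>f \<in> mors G. \<forall>g \<in> mors G. tns_m G f g \<in> mors G \<and>
        src G (tns_m G f g) = tns_o G (src G f) (src G g) \<and>
        tgt G (tns_m G f g) = tns_o G (tgt G f) (tgt G g)"
    "\<forall>x \<in> objs G. inv_o G x \<in> objs G"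
    "\<forall>x \<in> objs G. tns_o G x (inv_o G x) = unit_o G \<and> tns_o G (inv_o G x) x = unit_o G"
    "\<forall>x \<in> objs G. \<forall>y \<in> objs G. \<forall>z \<in> objs G.
        assoc G x y z \<in> hom G (tns_o G (tns_o G x y) z) (tns_o G x (tns_o G y z)) \<and>
        is_iso G (assoc G x y z)"
  using assms[unfolded is_two_group_def]
  apply -
  apply (elim conjE, assumption)+
  done

lemma catp:
  assumes "is_category G"
  shows "\<forall>x \<in> objs G. idm G x \<in> hom G x x"
  using assms[unfolded is_category_def] by (elim conjE)

theorem lemma2p6:
  fixes G :: "('o, 'm) two_group_data"
  assumes "topological_two_group G"
    and "discrete_in (mor_top G) {f \<in> mors G. src G f = unit_o G}"
  shows "(\<forall>(g, h, k) \<in> objs G \<times> objs G \<times> objs G.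
            tns_m G (assoc G g h k) (idm G (inv_o G (tns_o G (tns_o G g h) k)))
              \<in> {f \<in> mors G. src G f = unit_o G}) \<and>
         locally_constant_on (prod_topology (obj_top G) (prod_topology (obj_top G) (obj_top G)))
           (\<lambda>(g, h, k). tns_m G (assoc G g h k) (idm G (inv_o G (tns_o G (tns_o G g h) k))))"
proof -
  let ?O = "obj_top G" and ?M = "mor_top G"
  let ?X = "prod_topology ?O (prod_topology ?O ?O)"
  let ?S = "{f \<in> mors G. src G f = unit_o G}"
  define F where "F = (\<lambda>(g, h, k). tns_m G (assoc G g h k) (idm G (inv_o G (tns_o G (tns_o G g h) k))))"
  have tg: "is_two_group G" using assms(1)
    unfolding topological_two_group_def by (elim conjE)
  note T = tgp[OF tg]
  have cat: "is_category G" by (rule T(1))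
  have cto: "continuous_map (prod_topology ?O ?O) ?O (\<lambda>(x, y). tns_o G x y)"
   and ctm: "continuous_map (prod_topology ?M ?M) ?M (\<lambda>(f, g). tns_m G f g)"
   and cid: "continuous_map ?O ?M (idm G)"
   and cinv: "continuous_map ?O ?O (inv_o G)"
   and cas: "continuous_map ?X ?M (\<lambda>(x, y, z). assoc G x y z)"
    using assms(1)[unfolded topological_two_group_def]
    apply -
    apply (elim conjE, assumption)+
    done
  have p1: "continuous_map ?X ?O (\<lambda>p. fst p)" by (rule continuous_map_fst)
  have p2: "continuous_map ?X ?O (\<lambda>p. fst (snd p))"
    using continuous_map_fst_of[OF continuous_map_snd[of ?O "prod_topology ?O ?O"]] by (simp add: o_def)
  have p3: "continuous_map ?X ?O (\<lambda>p. snd (snd p))"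
    using continuous_map_snd_of[OF continuous_map_snd[of ?O "prod_topology ?O ?O"]] by (simp add: o_def)
  have c1: "continuous_map ?X ?O (\<lambda>p. tns_o G (fst p) (fst (snd p)))"
    using continuous_map_compose[OF continuous_map_pairedI[OF p1 p2] cto] by (simp add: o_def)
  have c2: "continuous_map ?X ?O (\<lambda>p. tns_o G (tns_o G (fst p) (fst (snd p))) (snd (snd p)))"
    using continuous_map_compose[OF continuous_map_pairedI[OF c1 p3] cto] by (simp add: o_def)
  have c3: "continuous_map ?X ?M (\<lambda>p. idm G (inv_o G (tns_o G (tns_o G (fst p) (fst (snd p))) (snd (snd p)))))"
    using continuous_map_compose[OF continuous_map_compose[OF c2 cinv] cid] by (simp add: o_def)
  have c4: "continuous_map ?X ?M (\<lambda>p. assoc G (fst p) (fst (snd p)) (snd (snd p)))"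
    using cas by (simp add: case_prod_beta')
  have cF: "continuous_map ?X ?M F"
    using continuous_map_compose[OF continuous_map_pairedI[OF c4 c3] ctm]
    by (simp add: o_def F_def case_prod_beta')
  have inS: "F p \<in> ?S" if "p \<in> objs G \<times> objs G \<times> objs G" for p
  proof -
    obtain g h k where p: "p = (g, h, k)" by (cases p) auto
    have g: "g \<in> objs G" and h: "h \<in> objs G" and k: "k \<in> objs G" using that p by auto
    define x where "x = tns_o G (tns_o G g h) k"
    have x: "x \<in> objs G" using T(2) g h k unfolding x_def by blast
    have ix: "inv_o G x \<in> objs G" using T(4) x by blast
    have a: "assoc G g h k \<in> hom G x (tns_o G g (tns_o G h k))"
      using T(6) g h k unfolding x_def by blast
    have am: "assoc G g h k \<in> mors G" and asrc: "src G (assoc G g h k) = x"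
      using a unfolding hom_def by auto
    have im: "idm G (inv_o G x) \<in> mors G" and isrc: "src G (idm G (inv_o G x)) = inv_o G x"
      using catp[OF cat] ix unfolding hom_def by auto
    have "tns_m G (assoc G g h k) (idm G (inv_o G x)) \<in> mors G \<and>
          src G (tns_m G (assoc G g h k) (idm G (inv_o G x))) = tns_o G x (inv_o G x)"
      using T(3) am im asrc isrc by auto
    moreover have "tns_o G x (inv_o G x) = unit_o G" using T(5) x by blast
    ultimately show ?thesis by (simp add: F_def p x_def)
  qed
  have tX: "topspace ?X = objs G \<times> objs G \<times> objs G" by (simp add: objs_def)
  have cFS: "continuous_map ?X (subtopology ?M ?S) F"
    using cF inS tX by (auto simp: continuous_map_in_subtopology)
  have lc: "locally_constant_on ?X F"
    unfolding locally_constant_on_def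
  proof
    fix p assume p: "p \<in> topspace ?X"
    have "openin (subtopology ?M ?S) {F p}"
      using assms(2) inS p tX unfolding discrete_in_def by auto
    then have "openin ?X {q \<in> topspace ?X. F q \<in> {F p}}"
      by (rule openin_continuous_map_preimage[OF cFS])
    then show "\<exists>U. openin ?X U \<and> p \<in> U \<and> (\<forall>y\<in>U. F y = F p)" using p by blast
  qed
  show ?thesis using inS lc unfolding F_def by auto
qed

end
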